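(* Let $\sigma>0$ and let $\vec\alpha,\vec\beta$ be non-negative sequences, neither identically zero, with $\sum_n n\alpha_n<\infty$ and $\sum_n n\beta_n<\infty$. Then for all integers $m,n\ge0$ and $L\ge1$, $$\frac{1}{2\pi}\int_{-2}^2 u_m(x)u_n(x)(x+\sigma)^L\sqrt{4-x^2}\,dx=\sum_{\vec\gamma\in\mathcal M^{(L)}_{m,n}}w(\vec\gamma),$$ and for real $z_0,z_1$ with $|z_0|,|z_1|\le1$, $$\mathbb E\big[z_0^{\gamma^{(L)}_0}z_1^{\gamma^{(L)}_L}\big]=\frac{\mathsf M_{\vec\alpha,\vec\beta,L}(z_0,z_1)}{\mathsf M_{\vec\alpha,\vec\beta,L}(1,1)},\qquad \mathsf M_{\vec\alpha,\vec\beta,L}(z_0,z_1):=\frac{1}{2\pi}\int_{-2}^2\Phi_{\vec\alpha}(z_0,x)\Phi_{\vec\beta}(z_1,x)(x+\sigma)^L\sqrt{4-x^2}\,dx,$$ where $\Phi_{\vec\alpha}(z,x)=\sum_{n\ge0}\alpha_nz^nu_n(x)$ and $\Phi_{\vec\beta}(z,x)=\sum_{n\ge0}\beta_nz^nu_n(x)$.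
   Context: $u_n$ are the monic Chebyshev polynomials of the second kind: $u_{-1}=0$, $u_0=1$, $xu_n(x)=u_{n+1}(x)+u_{n-1}(x)$ for $n\ge0$ (so $u_n(2\cos\theta)=\sin((n+1)\theta)/\sin\theta$). A Motzkin path of length $L$ is a sequence $(\gamma_0,\dots,\gamma_L)$ of non-negative integers with $|\gamma_k-\gamma_{k-1}|\le1$; $\mathcal M^{(L)}_{m,n}$ is the set of those with $\gamma_0=m$, $\gamma_L=n$, and $\mathcal M^{(L)}=\bigcup_{m,n}\mathcal M^{(L)}_{m,n}$. Weight: $w(\vec\gamma)=\sigma^{\#\{k:\gamma_k=\gamma_{k-1}\}}$. $(\gamma^{(L)}_0,\dots,\gamma^{(L)}_L)$ is a random path with law $\Pr_L(\vec\gamma)=\alpha_{\gamma_0}\beta_{\gamma_L}w(\vec\gamma)/\sum_{\vec\eta\in\mathcal M^{(L)}}\alpha_{\eta_0}\beta_{\eta_L}w(\vec\eta)$. *)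

theory Defs
  imports "HOL-Analysis.Analysis"
begin

fun cheb_u :: "nat \<Rightarrow> real \<Rightarrow> real" where
  "cheb_u 0 x = 1"
| "cheb_u (Suc 0) x = x"
| "cheb_u (Suc (Suc n)) x = x * cheb_u (Suc n) x - cheb_u n x"

definition motzkin_paths :: "nat \<Rightarrow> nat list set" where
  "motzkin_paths L = {\<gamma>. length \<gamma> = L + 1 \<and>
      (\<forall>k\<in>{1..L}. \<bar>int (\<gamma> ! k) - int (\<gamma> ! (k - 1))\<bar> \<le> 1)}"

definition motzkin_paths_between :: "nat \<Rightarrow> nat \<Rightarrow> nat \<Rightarrow> nat list set" where
  "motzkin_paths_between L m n = {\<gamma> \<in> motzkin_paths L. \<gamma> ! 0 = m \<and> \<gamma> ! L = n}"

definition motzkin_weight :: "real \<Rightarrow> nat \<Rightarrow> nat list \<Rightarrow> real" where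
  "motzkin_weight \<sigma> L \<gamma> = \<sigma> ^ card {k \<in> {1..L}. \<gamma> ! k = \<gamma> ! (k - 1)}"

definition motzkin_prob ::
  "(nat \<Rightarrow> real) \<Rightarrow> (nat \<Rightarrow> real) \<Rightarrow> real \<Rightarrow> nat \<Rightarrow> nat list \<Rightarrow> real" where
  "motzkin_prob \<alpha> \<beta> \<sigma> L \<gamma> =
     \<alpha> (\<gamma> ! 0) * \<beta> (\<gamma> ! L) * motzkin_weight \<sigma> L \<gamma> /
     infsum (\<lambda>\<eta>. \<alpha> (\<eta> ! 0) * \<beta> (\<eta> ! L) * motzkin_weight \<sigma> L \<eta>) (motzkin_paths L)"

definition Phi :: "(nat \<Rightarrow> real) \<Rightarrow> real \<Rightarrow> real \<Rightarrow> real" where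
  "Phi \<alpha> z x = (\<Sum>n. \<alpha> n * z ^ n * cheb_u n x)"

definition M_int ::
  "(nat \<Rightarrow> real) \<Rightarrow> (nat \<Rightarrow> real) \<Rightarrow> real \<Rightarrow> nat \<Rightarrow> real \<Rightarrow> real \<Rightarrow> real" where
  "M_int \<alpha> \<beta> \<sigma> L z0 z1 = 1 / (2 * pi) *
     integral {-2..2} (\<lambda>x. Phi \<alpha> z0 x * Phi \<beta> z1 x * (x + \<sigma>) ^ L * sqrt (4 - x\<^sup>2))"

end

theory Submission
  imports Defs
begin


lemma cheb_rec: "x * cheb_u m x = cheb_u (Suc m) x + (if m > 0 then cheb_u (m - 1) x else 0)"
  by (cases m) auto

lemma cheb_cont: "continuous_on S (cheb_u k)"
  proof -
  have "continuous_on S (cheb_u k) \<and> continuous_on S (cheb_u (Suc k))"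
    by (induction k) (auto intro!: continuous_intros)
  then show ?thesis by blast
qed

lemma sin_sum_aux: "sin (a + x) + sin (a - x) = 2 * sin a * cos (x::real)"
  by (simp add: sin_add sin_diff)

lemma cheb_trig0: "y = 2 * cos t \<Longrightarrow> cheb_u k y * sin t = sin ((real k + 1) * t)"
proof (induction k y rule: cheb_u.induct)
  case (1 x) then show ?case by simp
next
  case (2 x)
  have "sin ((real 1 + 1) * t) = 2 * sin t * cos t" using sin_double[of t] by simp
  then show ?case using 2 by simp
next
  case (3 n x)
  have "cheb_u (Suc (Suc n)) (2 * cos t) * sin t
      = 2 * cos t * (cheb_u (Suc n) (2 * cos t) * sin t) - cheb_u n (2 * cos t) * sin t"
    by (simp add: algebra_simps)
  also have "\<dots> = 2 * cos t * sin ((real n + 2) * t) - sin ((real n + 1) * t)"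
    using 3 by (simp add: add.commute)
  also have "\<dots> = sin ((real n + 3) * t)"
    using sin_sum_aux[of "(real n + 2) * t" t] by (simp add: algebra_simps)
  finally show ?case using 3 by (simp add: add.commute)
qed

lemma cheb_trig: "cheb_u k (2 * cos t) * sin t = sin ((real k + 1) * t)"
  using cheb_trig0 by blast

lemma cheb_2: "cheb_u k 2 = real k + 1 \<and> cheb_u k (-2) = (-1)^k * (real k + 1)"
proof -
  have "(cheb_u k 2 = real k + 1 \<and> cheb_u k (-2) = (-1)^k * (real k + 1)) \<and>
        (cheb_u (Suc k) 2 = real (Suc k) + 1 \<and> cheb_u (Suc k) (-2) = (-1)^(Suc k) * (real (Suc k) + 1))"
    by (induction k) (auto simp: algebra_simps)
  then show ?thesis by blast
qed

lemma sin_mult_bound: "\<bar>sin (real n * t)\<bar> \<le> real n * \<bar>sin t\<bar>"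
proof (induction n)
  case 0 then show ?case by simp
next
  case (Suc n)
  have "sin (real (Suc n) * t) = sin (real n * t) * cos t + cos (real n * t) * sin t"
    by (simp add: distrib_right sin_add)
  also have "\<bar>\<dots>\<bar> \<le> \<bar>sin (real n * t)\<bar> * \<bar>cos t\<bar> + \<bar>cos (real n * t)\<bar> * \<bar>sin t\<bar>"
    by (metis abs_mult abs_triangle_ineq)
  also have "\<dots> \<le> \<bar>sin (real n * t)\<bar> + \<bar>sin t\<bar>"
    by (intro add_mono) (auto intro: mult_left_le mult_left_le_one_le simp: abs_cos_le_one)
  finally show ?case using Suc by (simp add: algebra_simps)
qed

lemma cheb_bound:
  assumes "x \<in> {-2..2}"
  shows "\<bar>cheb_u k x\<bar> \<le> real k + 1"
proof (cases "x = 2 \<or> x = -2")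
  case True then show ?thesis using cheb_2[of k] by (auto simp: abs_mult)
next
  case False
  define t where "t = arccos (x / 2)"
  have x: "x = 2 * cos t" using assms by (simp add: t_def cos_arccos)
  have t: "0 < t" "t < pi" using assms False
    by (auto simp: t_def arccos_lt_bounded)
  have s: "sin t > 0" using t by (simp add: sin_gt_zero)
  have "\<bar>cheb_u k x\<bar> * sin t = \<bar>cheb_u k x * sin t\<bar>"
    using s by (simp add: abs_mult)
  also have "\<dots> = \<bar>sin ((real k + 1) * t)\<bar>"
    using cheb_trig[of k t] x by simp
  also have "\<dots> \<le> (real k + 1) * sin t"
    using sin_mult_bound[of "Suc k" t] s by (simp add: ac_simps)
  finally show ?thesis using s by simp
qed


lemma cos_int_pi:
  "((\<lambda>t. cos (real k * (pi - t))) has_integral (if k = 0 then pi else 0)) {0..pi}"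
proof (cases "k = 0")
  case True
  have d: "((\<lambda>t. t) has_vector_derivative 1) (at t within {0..pi})" for t
    unfolding has_real_derivative_iff_has_vector_derivative[symmetric]
    by (auto intro!: derivative_eq_intros)
  have "((\<lambda>t. 1::real) has_integral (pi - 0)) {0..pi}"
    by (rule fundamental_theorem_of_calculus) (use d in auto)
  then show ?thesis using True by simp
next
  case False
  have d: "((\<lambda>t. - sin (real k * (pi - t)) / real k) has_vector_derivative cos (real k * (pi - t)))
            (at t within {0..pi})" for t
    unfolding has_real_derivative_iff_has_vector_derivative[symmetric]
    using False by (auto intro!: derivative_eq_intros)
  have "((\<lambda>t. cos (real k * (pi - t))) has_integral
        ((- sin (real k * (pi - pi)) / real k) - (- sin (real k * (pi - 0)) / real k))) {0..pi}"
    by (rule fundamental_theorem_of_calculus) (use d in auto)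
  then show ?thesis using False by simp
qed

lemma sqrt_sin: "0 \<le> sin th \<Longrightarrow> sqrt (4 - (2 * cos th)\<^sup>2) = 2 * sin th"
proof -
  assume "0 \<le> sin th"
  have "4 - (2 * cos th)\<^sup>2 = (2 * sin th)\<^sup>2"
    by (simp add: power_mult_distrib sin_squared_eq algebra_simps)
  then show ?thesis using \<open>0 \<le> sin th\<close> by (metis real_sqrt_abs abs_of_nonneg mult_nonneg_nonneg zero_le_numeral)
qed

lemma cos_absdiff: "cos ((real m - real n) * th) = cos (real (if n \<le> m then m - n else n - m) * th)"
proof (cases "n \<le> m")
  case True then show ?thesis by (simp add: of_nat_diff)
next
  case False
  then have "(real m - real n) * th = - (real (n - m) * th)" by (simp add: of_nat_diff algebra_simps)
  then have "cos ((real m - real n) * th) = cos (real (n - m) * th)" by (simp only: cos_minus)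
  then show ?thesis using False by simp
qed

lemma key_int:
  assumes "t \<in> {0..pi}"
  shows "(2 * sin t) * (cheb_u m (-2 * cos t) * cheb_u n (-2 * cos t) * sqrt (4 - (-2 * cos t)\<^sup>2)) =
      2 * cos (real (if n \<le> m then m - n else n - m) * (pi - t)) - 2 * cos (real (m + n + 2) * (pi - t))"
proof -
  define th where "th = pi - t"
  have th: "0 \<le> th" "th \<le> pi" using assms by (auto simp: th_def)
  have s: "sin t = sin th" "-2 * cos t = 2 * cos th" by (simp_all add: th_def sin_diff cos_diff)
  have sn: "0 \<le> sin th" using th by (simp add: sin_ge_zero)
  have "(2 * sin t) * (cheb_u m (-2 * cos t) * cheb_u n (-2 * cos t) * sqrt (4 - (-2 * cos t)\<^sup>2)) =
        4 * (cheb_u m (2 * cos th) * sin th) * (cheb_u n (2 * cos th) * sin th)"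
    unfolding s using sqrt_sin[OF sn] by simp
  also have "\<dots> = 4 * sin ((real m + 1) * th) * sin ((real n + 1) * th)"
    by (simp only: cheb_trig)
  also have "\<dots> = 2 * cos ((real m + 1) * th - (real n + 1) * th) - 2 * cos ((real m + 1) * th + (real n + 1) * th)"
    by (simp add: cos_diff cos_add)
  also have "(real m + 1) * th - (real n + 1) * th = (real m - real n) * th"
    by (simp add: algebra_simps)
  also have "(real m + 1) * th + (real n + 1) * th = real (m + n + 2) * th"
    by (simp add: algebra_simps)
  finally have X: "(2 * sin t) * (cheb_u m (-2 * cos t) * cheb_u n (-2 * cos t) * sqrt (4 - (-2 * cos t)\<^sup>2)) =
      2 * cos ((real m - real n) * th) - 2 * cos (real (m + n + 2) * th)" .
  show ?thesis using X unfolding cos_absdiff th_def .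
qed


lemma orth:
  "((\<lambda>x. cheb_u m x * cheb_u n x * sqrt (4 - x\<^sup>2)) has_integral (if m = n then 2*pi else 0)) {-2..2}"
proof -
  define f where "f = (\<lambda>x. cheb_u m x * cheb_u n x * sqrt (4 - x\<^sup>2))"
  define k where "k = (if n \<le> m then m - n else n - m)"
  have fc: "continuous_on {-2..2} f"
    unfolding f_def by (intro continuous_intros cheb_cont)
  have sub: "((\<lambda>t. (2 * sin t) *\<^sub>R f (-2 * cos t)) has_integral integral {-2 * cos 0 .. -2 * cos pi} f) {0..pi}"
  proof (rule has_integral_substitution[of 0 pi "\<lambda>t. -2 * cos t" "-2" 2 f "\<lambda>t. 2 * sin t"])
    show "(\<lambda>t. -2 * cos t) ` {0..pi} \<subseteq> {-2..2}"
    proof -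
      { fix x :: real
        have "-2 * cos x \<in> {-2..2}" using cos_le_one[of x] cos_ge_minus_one[of x] by (simp; linarith) }
      then show ?thesis by auto
    qed
    show "continuous_on {-2..2} f" by (rule fc)
    show "((\<lambda>t. -2 * cos t) has_real_derivative 2 * sin x) (at x within {0..pi})" for x
      by (auto intro!: derivative_eq_intros)
  qed auto
  have key: "(2 * sin t) *\<^sub>R f (-2 * cos t) =
      2 * cos (real k * (pi - t)) - 2 * cos (real (m + n + 2) * (pi - t))" if "t \<in> {0..pi}" for t
    using key_int[OF that, of m n] unfolding f_def k_def real_scaleR_def .
  have H: "((\<lambda>t. 2 * cos (real k * (pi - t)) - 2 * cos (real (m + n + 2) * (pi - t)))
      has_integral (2 * (if k = 0 then pi else 0) - 2 * (if m + n + 2 = 0 then pi else 0))) {0..pi}"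
    by (intro has_integral_diff has_integral_mult_right cos_int_pi)
  have eq: "2 * (if k = 0 then pi else 0) - 2 * (if m + n + 2 = 0 then pi else 0) = (if m = n then 2 * pi else 0)"
    by (auto simp: k_def)
  have val: "((\<lambda>t. 2 * cos (real k * (pi - t)) - 2 * cos (real (m + n + 2) * (pi - t)))
      has_integral (if m = n then 2 * pi else 0)) {0..pi}"
    using H unfolding eq .
  have I1: "((\<lambda>t. (2 * sin t) *\<^sub>R f (-2 * cos t)) has_integral (if m = n then 2 * pi else 0)) {0..pi}"
    by (rule has_integral_eq[OF _ val]) (rule key[symmetric])
  have b: "{-2 * cos 0 .. -2 * cos pi} = {-2..2::real}" by simp
  have ie: "integral {-2..2} f = (if m = n then 2 * pi else 0)"
    using has_integral_unique[OF sub[unfolded b] I1] .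
  have fi: "f integrable_on {-2..2}" using fc by (rule integrable_continuous_real)
  have "(f has_integral (if m = n then 2 * pi else 0)) {-2..2}"
    using integrable_integral[OF fi] unfolding ie .
  then show ?thesis unfolding f_def .
qed


fun Wf :: "real \<Rightarrow> nat \<Rightarrow> nat \<Rightarrow> nat \<Rightarrow> real" where
  "Wf s 0 m n = (if m = n then 1 else 0)"
| "Wf s (Suc L) m n = Wf s L (Suc m) n + s * Wf s L m n + (if m > 0 then Wf s L (m - 1) n else 0)"

lemma Wf_zero: "m + L < n \<Longrightarrow> Wf s L m n = 0"
  by (induction L arbitrary: m) auto

lemma Wf_bound: "0 \<le> s \<Longrightarrow> 0 \<le> Wf s L m n \<and> Wf s L m n \<le> (2 + s) ^ L"
proof (induction L arbitrary: m)
  case 0 then show ?case by simp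
next
  case (Suc L)
  have a: "0 \<le> Wf s L (Suc m) n" "Wf s L (Suc m) n \<le> (2 + s) ^ L"
    "0 \<le> Wf s L m n" "Wf s L m n \<le> (2 + s) ^ L"
    "0 \<le> Wf s L (m - 1) n" "Wf s L (m - 1) n \<le> (2 + s) ^ L" using Suc by auto
  have b: "s * Wf s L m n \<le> s * (2 + s) ^ L" using a Suc.prems by (simp add: mult_left_mono)
  have c: "0 \<le> s * Wf s L m n" using a Suc.prems by simp
  show ?case using a b c by (auto simp: algebra_simps)
qed

lemma expand:
  "m + L \<le> N \<Longrightarrow> (x + s) ^ L * cheb_u m x = (\<Sum>k\<le>N. Wf s L m k * cheb_u k x)"
proof (induction L arbitrary: m)
  case 0
  have "\<And>k. Wf s 0 m k * cheb_u k x = (if k = m then cheb_u m x else 0)" by auto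
  then show ?case using 0 by (simp add: sum.delta)
next
  case (Suc L)
  have r: "(x + s) * cheb_u m x = cheb_u (Suc m) x + s * cheb_u m x + (if m > 0 then cheb_u (m - 1) x else 0)"
    using cheb_rec[of x m] by (simp add: algebra_simps)
  have "(x + s) ^ Suc L * cheb_u m x = (x + s) ^ L * ((x + s) * cheb_u m x)" by simp
  also have "\<dots> = (x + s) ^ L * cheb_u (Suc m) x + s * ((x + s) ^ L * cheb_u m x)
      + (if m > 0 then (x + s) ^ L * cheb_u (m - 1) x else 0)"
    unfolding r by (simp add: algebra_simps)
  also have "\<dots> = (\<Sum>k\<le>N. Wf s L (Suc m) k * cheb_u k x) + s * (\<Sum>k\<le>N. Wf s L m k * cheb_u k x)
      + (if m > 0 then (\<Sum>k\<le>N. Wf s L (m - 1) k * cheb_u k x) else 0)"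
    using Suc.IH[of "Suc m"] Suc.IH[of m] Suc.IH[of "m - 1"] Suc.prems by auto
  also have "\<dots> = (\<Sum>k\<le>N. Wf s (Suc L) m k * cheb_u k x)"
    by (cases m) (simp_all add: sum.distrib sum_distrib_left algebra_simps)
  finally show ?case .
qed

lemma part1_int:
  "((\<lambda>x. cheb_u m x * cheb_u n x * (x + s) ^ L * sqrt (4 - x\<^sup>2)) has_integral (2 * pi * Wf s L m n)) {-2..2}"
proof -
  define N where "N = m + L + n"
  have e: "cheb_u m x * cheb_u n x * (x + s) ^ L * sqrt (4 - x\<^sup>2) =
      (\<Sum>k\<le>N. Wf s L m k * (cheb_u k x * cheb_u n x * sqrt (4 - x\<^sup>2)))" for x
  proof -
    have "cheb_u m x * cheb_u n x * (x + s) ^ L * sqrt (4 - x\<^sup>2) =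
        ((x + s) ^ L * cheb_u m x) * (cheb_u n x * sqrt (4 - x\<^sup>2))" by (simp add: algebra_simps)
    also have "\<dots> = (\<Sum>k\<le>N. Wf s L m k * cheb_u k x) * (cheb_u n x * sqrt (4 - x\<^sup>2))"
      by (subst expand[of m L N]) (auto simp: N_def)
    also have "\<dots> = (\<Sum>k\<le>N. (Wf s L m k * cheb_u k x) * (cheb_u n x * sqrt (4 - x\<^sup>2)))"
      by (rule sum_distrib_right)
    finally show ?thesis by (simp only: mult.assoc)
  qed
  have "((\<lambda>x. \<Sum>k\<le>N. Wf s L m k * (cheb_u k x * cheb_u n x * sqrt (4 - x\<^sup>2))) has_integral
      (\<Sum>k\<le>N. Wf s L m k * (if k = n then 2 * pi else 0))) {-2..2}"
    by (intro has_integral_sum finite_atMost ballI has_integral_mult_right orth)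
  moreover have "(\<Sum>k\<le>N. Wf s L m k * (if k = n then 2 * pi else 0)) = 2 * pi * Wf s L m n"
  proof -
    have "\<And>k. Wf s L m k * (if k = n then 2 * pi else 0) = (if k = n then 2 * pi * Wf s L m n else 0)" by auto
    then show ?thesis by (simp add: sum.delta N_def)
  qed
  ultimately show ?thesis unfolding e[symmetric] by simp
qed


lemma paths_Cons:
  "(m # g \<in> motzkin_paths (Suc L)) \<longleftrightarrow> (g \<in> motzkin_paths L \<and> \<bar>int (g ! 0) - int m\<bar> \<le> 1)"
proof
  assume a: "m # g \<in> motzkin_paths (Suc L)"
  then have len: "length g = L + 1" and st: "\<And>k. k \<in> {1..Suc L} \<Longrightarrow>
      \<bar>int ((m # g) ! k) - int ((m # g) ! (k - 1))\<bar> \<le> 1"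
    by (auto simp: motzkin_paths_def)
  have "\<bar>int (g ! 0) - int m\<bar> \<le> 1" using st[of 1] by simp
  moreover have "\<bar>int (g ! k) - int (g ! (k - 1))\<bar> \<le> 1" if kk: "k \<in> {1..L}" for k
  proof -
    obtain j where j: "k = Suc j" using kk by (cases k) auto
    show ?thesis using st[of "Suc k"] kk j by simp
  qed
  ultimately show "g \<in> motzkin_paths L \<and> \<bar>int (g ! 0) - int m\<bar> \<le> 1"
    using len by (auto simp: motzkin_paths_def)
next
  assume a: "g \<in> motzkin_paths L \<and> \<bar>int (g ! 0) - int m\<bar> \<le> 1"
  then have len: "length g = L + 1" and st: "\<And>k. k \<in> {1..L} \<Longrightarrow>
      \<bar>int (g ! k) - int (g ! (k - 1))\<bar> \<le> 1" and h: "\<bar>int (g ! 0) - int m\<bar> \<le> 1"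
    by (auto simp: motzkin_paths_def)
  have "\<bar>int ((m # g) ! k) - int ((m # g) ! (k - 1))\<bar> \<le> 1" if kk: "k \<in> {1..Suc L}" for k
  proof (cases "k = 1")
    case True then show ?thesis using h by simp
  next
    case False
    then obtain j where j: "k = Suc (Suc j)" using kk by (cases k; cases "k - 1") auto
    show ?thesis using st[of "Suc j"] kk j by simp
  qed
  then show "m # g \<in> motzkin_paths (Suc L)" using len by (auto simp: motzkin_paths_def)
qed

lemma paths_nonempty: "g \<in> motzkin_paths L \<Longrightarrow> g = hd g # tl g"
  by (cases g) (auto simp: motzkin_paths_def)

lemma pb_Suc:
  "motzkin_paths_between (Suc L) m n = (\<lambda>g. m # g) `
     (motzkin_paths_between L (Suc m) n \<union> motzkin_paths_between L m n \<union>
      (if m > 0 then motzkin_paths_between L (m - 1) n else {}))" (is "?A = ?B")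
proof
  show "?A \<subseteq> ?B"
  proof
    fix g' assume g': "g' \<in> ?A"
    then have gp: "g' \<in> motzkin_paths (Suc L)" and h0: "g' ! 0 = m" and hL: "g' ! Suc L = n"
      by (auto simp: motzkin_paths_between_def)
    obtain g where gg: "g' = m # g" using paths_nonempty[OF gp] h0 by (metis nth_Cons_0)
    have gm: "g \<in> motzkin_paths L" "\<bar>int (g ! 0) - int m\<bar> \<le> 1" using gp gg paths_Cons by auto
    have "g ! L = n" using hL gg by simp
    moreover have "g ! 0 = Suc m \<or> g ! 0 = m \<or> (m > 0 \<and> g ! 0 = m - 1)" using gm(2) by auto
    ultimately have "g \<in> motzkin_paths_between L (Suc m) n \<union> motzkin_paths_between L m n \<union>
      (if m > 0 then motzkin_paths_between L (m - 1) n else {})"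
      using gm(1) by (auto simp: motzkin_paths_between_def)
    then show "g' \<in> ?B" using gg by blast
  qed
next
  show "?B \<subseteq> ?A"
  proof
    fix g' assume "g' \<in> ?B"
    then obtain g where gg: "g' = m # g" and g: "g \<in> motzkin_paths_between L (Suc m) n \<union> motzkin_paths_between L m n \<union>
      (if m > 0 then motzkin_paths_between L (m - 1) n else {})" by blast
    then have gm: "g \<in> motzkin_paths L" "g ! L = n" "\<bar>int (g ! 0) - int m\<bar> \<le> 1"
      by (auto simp: motzkin_paths_between_def split: if_splits)
    then show "g' \<in> ?A" using gg paths_Cons by (auto simp: motzkin_paths_between_def)
  qed
qed

lemma pb_0: "motzkin_paths_between 0 m n = (if m = n then {[m]} else {})"
proof -
  have "g \<in> motzkin_paths 0 \<longleftrightarrow> length g = 1" for g by (auto simp: motzkin_paths_def)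
  then show ?thesis
    by (auto simp: motzkin_paths_between_def length_Suc_conv)
qed

lemma card_filter_sum: "finite A \<Longrightarrow> card {k \<in> A. P k} = (\<Sum>k\<in>A. if P k then 1 else 0)"
  by (simp add: sum.If_cases Int_def conj_commute)

lemma weight_Cons:
  assumes "g \<in> motzkin_paths L"
  shows "motzkin_weight s (Suc L) (m # g) = (if g ! 0 = m then s else 1) * motzkin_weight s L g"
proof -
  have "card {k \<in> {1..Suc L}. (m # g) ! k = (m # g) ! (k - 1)} =
        (\<Sum>k\<in>{1..Suc L}. if (m # g) ! k = (m # g) ! (k - 1) then 1 else 0)"
    by (rule card_filter_sum) simp
  also have "\<dots> = (if g ! 0 = m then 1 else 0) + (\<Sum>k\<in>{Suc 1..Suc L}. if (m # g) ! k = (m # g) ! (k - 1) then 1 else 0)"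
    by (subst sum.atLeast_Suc_atMost) auto
  also have "(\<Sum>k\<in>{Suc 1..Suc L}. if (m # g) ! k = (m # g) ! (k - 1) then 1 else 0) =
             (\<Sum>k\<in>{1..L}. if (m # g) ! Suc k = (m # g) ! (Suc k - 1) then 1 else 0)"
    by (rule sum.shift_bounds_cl_Suc_ivl)
  also have "\<dots> = (\<Sum>k\<in>{1..L}. if g ! k = g ! (k - 1) then 1 else 0)"
    by (intro sum.cong refl) (auto simp: nth_Cons split: nat.splits)
  also have "\<dots> = card {k \<in> {1..L}. g ! k = g ! (k - 1)}"
    by (rule card_filter_sum[symmetric]) simp
  finally show ?thesis unfolding motzkin_weight_def by (simp add: power_add)
qed


lemma sum_pb_Cons:
  assumes "finite (motzkin_paths_between L k n)" "\<And>g. g \<in> motzkin_paths_between L k n \<Longrightarrow> g ! 0 = k"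
  shows "(\<Sum>g\<in>motzkin_paths_between L k n. motzkin_weight s (Suc L) (m # g)) =
         (if k = m then s else 1) * (\<Sum>g\<in>motzkin_paths_between L k n. motzkin_weight s L g)"
  unfolding sum_distrib_left
  by (intro sum.cong refl) (auto simp: weight_Cons motzkin_paths_between_def)

lemma Wf_paths:
  "finite (motzkin_paths_between L m n) \<and>
   Wf s L m n = (\<Sum>g\<in>motzkin_paths_between L m n. motzkin_weight s L g)"
proof (induction L arbitrary: m)
  case 0
  then show ?case by (simp add: pb_0 motzkin_weight_def)
next
  case (Suc L)
  define A where "A = motzkin_paths_between L (Suc m) n"
  define B where "B = motzkin_paths_between L m n"
  define C where "C = (if m > 0 then motzkin_paths_between L (m - 1) n else {})"
  have fA: "finite A" and fB: "finite B" and fC: "finite C"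
    using Suc.IH by (auto simp: A_def B_def C_def)
  have e: "motzkin_paths_between (Suc L) m n = (\<lambda>g. m # g) ` (A \<union> B \<union> C)"
    unfolding A_def B_def C_def by (rule pb_Suc)
  have d1: "A \<inter> B = {}" by (auto simp: A_def B_def motzkin_paths_between_def)
  have d2: "(A \<union> B) \<inter> C = {}" by (auto simp: A_def B_def C_def motzkin_paths_between_def)
  have "(\<Sum>g\<in>motzkin_paths_between (Suc L) m n. motzkin_weight s (Suc L) g)
      = (\<Sum>g\<in>A \<union> B \<union> C. motzkin_weight s (Suc L) (m # g))"
    unfolding e by (subst sum.reindex) (auto simp: inj_on_def)
  also have "\<dots> = (\<Sum>g\<in>A. motzkin_weight s (Suc L) (m # g)) + (\<Sum>g\<in>B. motzkin_weight s (Suc L) (m # g))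
      + (\<Sum>g\<in>C. motzkin_weight s (Suc L) (m # g))"
    using fA fB fC d1 d2 by (simp add: sum.union_disjoint)
  also have "(\<Sum>g\<in>A. motzkin_weight s (Suc L) (m # g)) = Wf s L (Suc m) n"
    unfolding A_def using Suc.IH[of "Suc m"]
    by (subst sum_pb_Cons) (auto simp: motzkin_paths_between_def)
  also have "(\<Sum>g\<in>B. motzkin_weight s (Suc L) (m # g)) = s * Wf s L m n"
    unfolding B_def using Suc.IH[of m]
    by (subst sum_pb_Cons) (auto simp: motzkin_paths_between_def)
  also have "(\<Sum>g\<in>C. motzkin_weight s (Suc L) (m # g)) = (if m > 0 then Wf s L (m - 1) n else 0)"
  proof (cases "m > 0")
    case True
    then have "C = motzkin_paths_between L (m - 1) n" by (simp add: C_def)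
    then show ?thesis using Suc.IH[of "m - 1"] True
      by (simp, subst sum_pb_Cons) (auto simp: motzkin_paths_between_def)
  qed (simp add: C_def)
  finally show ?case using e fA fB fC by simp
qed



lemma cheb_series_bound:
  assumes "x \<in> {-2..2}"
  shows "norm (a m * cheb_u m x) \<le> (real m + 1) * \<bar>a m\<bar>"
proof -
  have "\<bar>a m\<bar> * \<bar>cheb_u m x\<bar> \<le> \<bar>a m\<bar> * (real m + 1)"
    using cheb_bound[OF assms, of m] by (intro mult_left_mono) auto
  then show ?thesis by (simp add: abs_mult mult.commute)
qed

lemma cheb_series_summable:
  assumes "summable (\<lambda>m. (real m + 1) * \<bar>a m\<bar>)" "x \<in> {-2..2}"
  shows "summable (\<lambda>m. a m * cheb_u m x)"
  using assms(1) by (rule summable_comparison_test'[where N=0]) (use cheb_series_bound[OF assms(2)] in auto)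

lemma Phi_cont:
  assumes sa: "summable (\<lambda>m. (real m + 1) * \<bar>a m\<bar>)"
  shows "continuous_on {-2..2} (\<lambda>x. \<Sum>m. a m * cheb_u m x)"
proof (rule uniform_limit_theorem)
  show "uniform_limit {-2..2} (\<lambda>N x. \<Sum>m<N. a m * cheb_u m x) (\<lambda>x. \<Sum>m. a m * cheb_u m x) sequentially"
    by (rule Weierstrass_m_test[OF _ sa]) (rule cheb_series_bound)
  show "\<forall>\<^sub>F N in sequentially. continuous_on {-2..2} (\<lambda>x. \<Sum>m<N. a m * cheb_u m x)"
    by (intro always_eventually allI continuous_intros cheb_cont)
qed simp

lemma series_integral:
  fixes a :: "nat \<Rightarrow> real" and g :: "real \<Rightarrow> real"
  assumes sa: "summable (\<lambda>m. (real m + 1) * \<bar>a m\<bar>)" and gc: "continuous_on {-2..2} g"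
  shows "(\<lambda>m. a m * integral {-2..2} (\<lambda>x. cheb_u m x * g x)) sums
           integral {-2..2} (\<lambda>x. (\<Sum>m. a m * cheb_u m x) * g x)"
proof -
  have "bounded (g ` {-2..2})"
    by (intro compact_imp_bounded compact_continuous_image gc) simp
  then obtain B where B: "\<And>x. x \<in> {-2..2} \<Longrightarrow> \<bar>g x\<bar> \<le> B"
    unfolding bounded_real by blast
  define f where "f m x = a m * cheb_u m x * g x" for m x
  have bnd: "norm (f m x) \<le> (real m + 1) * \<bar>a m\<bar> * B" if x: "x \<in> {-2..2}" for m x
  proof -
    have "norm (f m x) = norm (a m * cheb_u m x) * \<bar>g x\<bar>" by (simp add: f_def abs_mult)
    also have "\<dots> \<le> ((real m + 1) * \<bar>a m\<bar>) * B"
      by (intro mult_mono cheb_series_bound B x) auto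
    finally show ?thesis .
  qed
  have sM: "summable (\<lambda>m. (real m + 1) * \<bar>a m\<bar> * B)" by (rule summable_mult2[OF sa])
  have u: "uniform_limit {-2..2} (\<lambda>N x. \<Sum>m<N. f m x) (\<lambda>x. \<Sum>m. f m x) sequentially"
    by (rule Weierstrass_m_test[OF bnd sM])
  have c: "continuous_on {-2..2} (\<lambda>x. \<Sum>m<N. f m x)" for N
    unfolding f_def by (intro continuous_intros cheb_cont gc)
  obtain I J where I: "\<And>N. ((\<lambda>x. \<Sum>m<N. f m x) has_integral I N) {-2..2}"
    and J: "((\<lambda>x. \<Sum>m. f m x) has_integral J) {-2..2}" and lim: "I \<longlonglongrightarrow> J"
    using uniform_limit_integral[OF u c] by auto
  have ig: "((\<lambda>x. cheb_u m x * g x) has_integral integral {-2..2} (\<lambda>x. cheb_u m x * g x)) {-2..2}" for m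
    by (intro integrable_integral integrable_continuous_real continuous_intros cheb_cont gc)
  have IN: "I N = (\<Sum>m<N. a m * integral {-2..2} (\<lambda>x. cheb_u m x * g x))" for N
  proof -
    have "((\<lambda>x. \<Sum>m<N. f m x) has_integral (\<Sum>m<N. a m * integral {-2..2} (\<lambda>x. cheb_u m x * g x))) {-2..2}"
      unfolding f_def mult.assoc by (intro has_integral_sum finite_lessThan ballI has_integral_mult_right ig)
    then show ?thesis using I has_integral_unique by blast
  qed
  have fe: "(\<Sum>m. f m x) = (\<Sum>m. a m * cheb_u m x) * g x" if "x \<in> {-2..2}" for x
    unfolding f_def using suminf_mult2[OF cheb_series_summable[OF sa that], of "g x"] by simp
  have "((\<lambda>x. (\<Sum>m. a m * cheb_u m x) * g x) has_integral J) {-2..2}"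
    by (rule has_integral_eq[OF _ J]) (rule fe)
  then have "J = integral {-2..2} (\<lambda>x. (\<Sum>m. a m * cheb_u m x) * g x)"
    by (rule integral_unique[symmetric])
  then show ?thesis using lim unfolding sums_def IN by simp
qed


lemma inner_series:
  assumes sb: "summable (\<lambda>n. (real n + 1) * \<bar>b n\<bar>)"
  shows "(\<lambda>n. b n * Wf s L m n) sums
     (integral {-2..2} (\<lambda>x. (\<Sum>n. b n * cheb_u n x) * (cheb_u m x * (x + s) ^ L * sqrt (4 - x\<^sup>2))) / (2 * pi))"
proof -
  have gc: "continuous_on {-2..2} (\<lambda>x. cheb_u m x * (x + s) ^ L * sqrt (4 - x\<^sup>2))"
    by (intro continuous_intros cheb_cont)
  have e: "integral {-2..2} (\<lambda>x. cheb_u n x * (cheb_u m x * (x + s) ^ L * sqrt (4 - x\<^sup>2))) = 2 * pi * Wf s L m n" for n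
  proof -
    have "(\<lambda>x. cheb_u n x * (cheb_u m x * (x + s) ^ L * sqrt (4 - x\<^sup>2))) =
          (\<lambda>x. cheb_u m x * cheb_u n x * (x + s) ^ L * sqrt (4 - x\<^sup>2))" by (simp add: fun_eq_iff ac_simps)
    then show ?thesis using part1_int[of m n s L] by (simp add: integral_unique)
  qed
  have "(\<lambda>n. b n * (2 * pi * Wf s L m n)) sums
     integral {-2..2} (\<lambda>x. (\<Sum>n. b n * cheb_u n x) * (cheb_u m x * (x + s) ^ L * sqrt (4 - x\<^sup>2)))"
    using series_integral[OF sb gc] unfolding e .
  from sums_divide[OF this, of "2 * pi"] show ?thesis by (simp add: field_simps)
qed

lemma M_series:
  assumes sa: "summable (\<lambda>m. (real m + 1) * \<bar>a m\<bar>)" and sb: "summable (\<lambda>n. (real n + 1) * \<bar>b n\<bar>)"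
  shows "(\<lambda>m. a m * (\<Sum>n. b n * Wf s L m n)) sums
     (1 / (2 * pi) * integral {-2..2} (\<lambda>x. (\<Sum>m. a m * cheb_u m x) * (\<Sum>n. b n * cheb_u n x) * (x + s) ^ L * sqrt (4 - x\<^sup>2)))"
proof -
  define V where "V m = integral {-2..2} (\<lambda>x. (\<Sum>n. b n * cheb_u n x) * (cheb_u m x * (x + s) ^ L * sqrt (4 - x\<^sup>2)))" for m
  have inn: "(\<Sum>n. b n * Wf s L m n) = V m / (2 * pi)" for m
    using inner_series[OF sb, of s L m] unfolding V_def by (simp add: sums_iff)
  have Gc: "continuous_on {-2..2} (\<lambda>x. (\<Sum>n. b n * cheb_u n x) * (x + s) ^ L * sqrt (4 - x\<^sup>2))"
    by (intro continuous_intros Phi_cont sb)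
  have e: "integral {-2..2} (\<lambda>x. cheb_u m x * ((\<Sum>n. b n * cheb_u n x) * (x + s) ^ L * sqrt (4 - x\<^sup>2))) = V m" for m
    unfolding V_def by (rule arg_cong[where f="integral {-2..2}"]) (simp add: fun_eq_iff ac_simps)
  have "(\<lambda>m. a m * V m) sums
      integral {-2..2} (\<lambda>x. (\<Sum>m. a m * cheb_u m x) * ((\<Sum>n. b n * cheb_u n x) * (x + s) ^ L * sqrt (4 - x\<^sup>2)))"
    using series_integral[OF sa Gc] unfolding e .
  from sums_divide[OF this, of "2 * pi"] show ?thesis
    unfolding inn by (simp add: field_simps mult.assoc)
qed


lemma paths_has_sum:
  fixes \<alpha> \<beta> :: "nat \<Rightarrow> real" and s z0 z1 :: real
  assumes s: "s \<ge> 0" and an: "\<And>n. \<alpha> n \<ge> 0" and bn: "\<And>n. \<beta> n \<ge> 0"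
    and sa: "summable \<alpha>" and sb: "summable \<beta>" and z0: "\<bar>z0\<bar> \<le> 1" and z1: "\<bar>z1\<bar> \<le> 1"
  shows "((\<lambda>g. \<alpha> (g ! 0) * \<beta> (g ! L) * motzkin_weight s L g * z0 ^ (g ! 0) * z1 ^ (g ! L)) has_sum
          (\<Sum>m. (\<alpha> m * z0 ^ m) * (\<Sum>n. (\<beta> n * z1 ^ n) * Wf s L m n))) (motzkin_paths L)"
proof -
  define a where "a m = \<alpha> m * z0 ^ m" for m
  define b where "b n = \<beta> n * z1 ^ n" for n
  define P where "P m n = motzkin_paths_between L m n" for m n
  define w where "w = motzkin_weight s L"
  define W where "W m n = Wf s L m n" for m n
  define C where "C = (2 + s) ^ L"
  define T where "T = Sigma UNIV (\<lambda>m. Sigma UNIV (\<lambda>n. P m n))"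
  define h where "h = (\<lambda>(m, (n, g)). a m * b n * w g)"
  define k where "k = (\<lambda>(m, (n, g)). \<alpha> m * \<beta> n * w g)"
  define V where "V m = (\<Sum>n. b n * W m n)" for m
  have w0: "w g \<ge> 0" for g unfolding w_def motzkin_weight_def using s by simp
  have fP: "finite (P m n)" for m n unfolding P_def using Wf_paths by blast
  have WP: "W m n = sum w (P m n)" for m n unfolding P_def W_def w_def using Wf_paths by blast
  have W0: "0 \<le> W m n" and WC: "W m n \<le> C" for m n unfolding W_def C_def using Wf_bound[OF s] by auto
  have C0: "0 \<le> C" unfolding C_def using s by simp
  have aa: "\<bar>a m\<bar> \<le> \<alpha> m" for m
  proof -
    have "\<bar>a m\<bar> = \<alpha> m * \<bar>z0\<bar> ^ m" unfolding a_def using an[of m] by (simp add: abs_mult power_abs)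
    also have "\<dots> \<le> \<alpha> m * 1" using an[of m] z0 by (intro mult_left_mono power_le_one) auto
    finally show ?thesis by simp
  qed
  have bb: "\<bar>b n\<bar> \<le> \<beta> n" for n
  proof -
    have "\<bar>b n\<bar> = \<beta> n * \<bar>z1\<bar> ^ n" unfolding b_def using bn[of n] by (simp add: abs_mult power_abs)
    also have "\<dots> \<le> \<beta> n * 1" using bn[of n] z1 by (intro mult_left_mono power_le_one) auto
    finally show ?thesis by simp
  qed
  have sbC: "summable (\<lambda>n. \<beta> n * C)" by (rule summable_mult2[OF sb])
  have sumBW: "summable (\<lambda>n. \<beta> n * W m n)" for m
    by (rule summable_comparison_test'[OF sbC, where N=0]) (use bn W0 WC in \<open>auto intro: mult_left_mono\<close>)
  have normbW: "norm (b n * W m n) \<le> \<beta> n * W m n" for m n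
  proof -
    have "norm (b n * W m n) = \<bar>b n\<bar> * W m n" using W0[of m n] by (simp add: abs_mult)
    then show ?thesis using mult_right_mono[OF bb[of n] W0[of m n]] by simp
  qed
  have sumbW_norm: "summable (\<lambda>n. norm (b n * W m n))" for m
    by (rule summable_comparison_test'[OF sumBW[of m], where N=0]) (use normbW in simp)
  have sumbW: "summable (\<lambda>n. b n * W m n)" for m
    by (rule summable_norm_cancel[OF sumbW_norm])
  have VB: "\<bar>V m\<bar> \<le> C * suminf \<beta>" for m
  proof -
    have "\<bar>V m\<bar> \<le> (\<Sum>n. norm (b n * W m n))" unfolding V_def
      using summable_norm[OF sumbW_norm] by simp
    also have "\<dots> \<le> (\<Sum>n. \<beta> n * C)"
      by (intro suminf_le sumbW_norm sbC order_trans[OF normbW mult_left_mono[OF WC bn]])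
    also have "\<dots> = C * suminf \<beta>" using suminf_mult2[OF sb, of C] by (simp add: mult.commute)
    finally show ?thesis .
  qed
  have kin_has: "((\<lambda>g. k (m, n, g)) has_sum \<alpha> m * \<beta> n * W m n) (P m n)" for m n
    unfolding k_def WP by (simp add: has_sum_finiteI fP sum_distrib_left)
  have kin_nn: "\<alpha> m * \<beta> n * W m n \<ge> 0" for m n using an bn W0 by simp
  have km_summ: "(\<lambda>n. \<alpha> m * \<beta> n * W m n) summable_on UNIV" for m
    by (rule summable_nonneg_imp_summable_on[OF _ kin_nn])
       (use summable_mult[OF sumBW[of m], of "\<alpha> m"] in \<open>simp add: mult.assoc\<close>)
  have km_S: "(\<lambda>y. k (m, y)) summable_on Sigma UNIV (P m)" for m
    by (rule summable_on_SigmaI[where g="\<lambda>n. \<alpha> m * \<beta> n * W m n"])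
       (use kin_has km_summ an bn w0 in \<open>auto simp: k_def\<close>)
  have km_has: "((\<lambda>y. k (m, y)) has_sum \<alpha> m * (\<Sum>n. \<beta> n * W m n)) (Sigma UNIV (P m))" for m
  proof (rule has_sum_SigmaI[where g="\<lambda>n. \<alpha> m * \<beta> n * W m n"])
    show "((\<lambda>n. \<alpha> m * \<beta> n * W m n) has_sum \<alpha> m * (\<Sum>n. \<beta> n * W m n)) UNIV"
      by (rule sums_nonneg_imp_has_sum[OF _ kin_nn])
         (use sums_mult[OF summable_sums[OF sumBW[of m]], of "\<alpha> m"] in \<open>simp add: mult.assoc\<close>)
  qed (use kin_has km_S in auto)
  have G_nn: "0 \<le> \<alpha> m * (\<Sum>n. \<beta> n * W m n)" for m
    using an[of m] suminf_nonneg[OF sumBW[of m]] bn W0 by simp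
  have G_le: "\<alpha> m * (\<Sum>n. \<beta> n * W m n) \<le> \<alpha> m * (C * suminf \<beta>)" for m
  proof -
    have "(\<Sum>n. \<beta> n * W m n) \<le> (\<Sum>n. \<beta> n * C)"
      by (intro suminf_le sumBW sbC mult_left_mono[OF WC bn])
    also have "\<dots> = C * suminf \<beta>" using suminf_mult2[OF sb, of C] by (simp add: mult.commute)
    finally show ?thesis using an[of m] by (rule mult_left_mono) 
  qed
  have G_summ: "(\<lambda>m. \<alpha> m * (\<Sum>n. \<beta> n * W m n)) summable_on UNIV"
    by (rule summable_nonneg_imp_summable_on[OF _ G_nn], rule summable_comparison_test'[where N=0])
       (use summable_mult2[OF sa, of "C * suminf \<beta>"] G_le G_nn in auto)
  have k_summ: "k summable_on T"
    unfolding T_def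
    by (rule summable_on_SigmaI[OF km_has G_summ]) (use an bn w0 in \<open>auto simp: k_def\<close>)
  have k_nn: "k x \<ge> 0" for x using an bn w0 by (auto simp: k_def split: prod.splits)
  have hk: "norm (h x) \<le> norm (k x)" for x
  proof -
    obtain m n g where x: "x = (m, n, g)" by (cases x) auto
    have "\<bar>a m * b n * w g\<bar> \<le> \<alpha> m * \<beta> n * w g"
      using aa[of m] bb[of n] w0[of g] by (simp add: abs_mult mult_mono' mult_right_mono)
    then show ?thesis using k_nn[of x] by (simp add: x h_def k_def)
  qed
  have h_summ: "h summable_on T"
    apply (rule abs_summable_summable)
    apply (rule Infinite_Sum.abs_summable_on_comparison_test[where g=k])
    using k_summ k_nn hk by auto
  have hm_summ: "(\<lambda>y. h (m, y)) summable_on Sigma UNIV (P m)" for m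
    apply (rule abs_summable_summable)
    apply (rule Infinite_Sum.abs_summable_on_comparison_test[where g="\<lambda>y. k (m, y)"])
    using km_S[of m] k_nn hk by auto
  have hin_has: "((\<lambda>g. h (m, n, g)) has_sum a m * b n * W m n) (P m n)" for m n
    unfolding h_def WP by (simp add: has_sum_finiteI fP sum_distrib_left)
  have hm_has: "((\<lambda>y. h (m, y)) has_sum a m * V m) (Sigma UNIV (P m))" for m
  proof (rule has_sum_SigmaI[where g="\<lambda>n. a m * b n * W m n"])
    show "((\<lambda>n. a m * b n * W m n) has_sum a m * V m) UNIV"
    proof (rule norm_summable_imp_has_sum)
      show "summable (\<lambda>n. norm (a m * b n * W m n))"
        using summable_mult[OF sumbW_norm[of m], of "\<bar>a m\<bar>"] by (simp add: abs_mult mult.assoc)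
      show "(\<lambda>n. a m * b n * W m n) sums (a m * V m)"
        using sums_mult[OF summable_sums[OF sumbW[of m]], of "a m"] by (simp add: V_def mult.assoc)
    qed
  qed (use hin_has hm_summ in auto)
  have aV_norm: "summable (\<lambda>m. norm (a m * V m))"
  proof (rule summable_comparison_test'[where N=0])
    show "summable (\<lambda>m. \<alpha> m * (C * suminf \<beta>))" by (rule summable_mult2[OF sa])
    show "norm (norm (a m * V m)) \<le> \<alpha> m * (C * suminf \<beta>)" if "0 \<le> m" for m
    proof -
      have "\<bar>a m\<bar> * \<bar>V m\<bar> \<le> \<alpha> m * (C * suminf \<beta>)"
        by (intro mult_mono aa VB) (use an C0 suminf_nonneg[OF sb] bn in auto)
      then show ?thesis by (simp add: abs_mult)
    qed
  qed
  have aV_has: "((\<lambda>m. a m * V m) has_sum (\<Sum>m. a m * V m)) UNIV"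
    by (rule norm_summable_imp_has_sum[OF aV_norm summable_sums[OF summable_norm_cancel[OF aV_norm]]])
  have h_has: "(h has_sum (\<Sum>m. a m * V m)) T"
    unfolding T_def by (rule has_sum_SigmaI[OF hm_has aV_has]) (use h_summ T_def in simp)
  have "((\<lambda>g. \<alpha> (g ! 0) * \<beta> (g ! L) * motzkin_weight s L g * z0 ^ (g ! 0) * z1 ^ (g ! L)) has_sum
          (\<Sum>m. a m * V m)) (motzkin_paths L) = (h has_sum (\<Sum>m. a m * V m)) T"
  proof (rule has_sum_reindex_bij_witness[where i="\<lambda>x. snd (snd x)" and j="\<lambda>g. (g ! 0, g ! L, g)"])
    show "\<And>g. g \<in> motzkin_paths L \<Longrightarrow> (g ! 0, g ! L, g) \<in> T"
      by (auto simp: T_def P_def motzkin_paths_between_def)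
    show "\<And>x. x \<in> T \<Longrightarrow> (snd (snd x) ! 0, snd (snd x) ! L, snd (snd x)) = x"
      by (auto simp: T_def P_def motzkin_paths_between_def)
    show "\<And>x. x \<in> T \<Longrightarrow> snd (snd x) \<in> motzkin_paths L"
      by (auto simp: T_def P_def motzkin_paths_between_def)
    show "\<And>g. g \<in> motzkin_paths L \<Longrightarrow> h (g ! 0, g ! L, g) =
        \<alpha> (g ! 0) * \<beta> (g ! L) * motzkin_weight s L g * z0 ^ (g ! 0) * z1 ^ (g ! L)"
      by (simp add: h_def a_def b_def w_def ac_simps)
  qed auto
  then show ?thesis using h_has by (simp add: a_def b_def V_def W_def)
qed


lemma le_nmult: "0 \<le> (c::real) \<Longrightarrow> 1 \<le> n \<Longrightarrow> c \<le> real n * c"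
  using mult_right_mono[of 1 "real n" c] by simp

theorem lemma3p1:
  fixes \<sigma> :: real and \<alpha> \<beta> :: "nat \<Rightarrow> real"
  assumes "\<sigma> > 0"
    and "\<And>n. \<alpha> n \<ge> 0" and "\<And>n. \<beta> n \<ge> 0"
    and "\<exists>n. \<alpha> n \<noteq> 0" and "\<exists>n. \<beta> n \<noteq> 0"
    and "summable (\<lambda>n. real n * \<alpha> n)" and "summable (\<lambda>n. real n * \<beta> n)"
  shows "(\<forall>m n L. L \<ge> 1 \<longrightarrow>
            1 / (2 * pi) * integral {-2..2}
              (\<lambda>x. cheb_u m x * cheb_u n x * (x + \<sigma>) ^ L * sqrt (4 - x\<^sup>2))
            = (\<Sum>\<gamma>\<in>motzkin_paths_between L m n. motzkin_weight \<sigma> L \<gamma>))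
       \<and> (\<forall>L z0 z1. L \<ge> 1 \<longrightarrow> \<bar>z0\<bar> \<le> 1 \<longrightarrow> \<bar>z1\<bar> \<le> 1 \<longrightarrow>
            ((\<lambda>\<gamma>. motzkin_prob \<alpha> \<beta> \<sigma> L \<gamma> * z0 ^ (\<gamma> ! 0) * z1 ^ (\<gamma> ! L))
              has_sum (M_int \<alpha> \<beta> \<sigma> L z0 z1 / M_int \<alpha> \<beta> \<sigma> L 1 1)) (motzkin_paths L))"
proof (intro conjI allI impI)
  fix m n L :: nat
  have "integral {-2..2} (\<lambda>x. cheb_u m x * cheb_u n x * (x + \<sigma>) ^ L * sqrt (4 - x\<^sup>2)) = 2 * pi * Wf \<sigma> L m n"
    by (rule integral_unique[OF part1_int])
  then show "1 / (2 * pi) * integral {-2..2}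
              (\<lambda>x. cheb_u m x * cheb_u n x * (x + \<sigma>) ^ L * sqrt (4 - x\<^sup>2))
            = (\<Sum>\<gamma>\<in>motzkin_paths_between L m n. motzkin_weight \<sigma> L \<gamma>)"
    using Wf_paths[of L m n \<sigma>] by simp
next
  fix L :: nat and z0 z1 :: real
  assume "L \<ge> 1" and z0: "\<bar>z0\<bar> \<le> 1" and z1: "\<bar>z1\<bar> \<le> 1"
  have s: "\<sigma> \<ge> 0" using assms(1) by simp
  have an: "\<And>n. \<alpha> n \<ge> 0" and bn: "\<And>n. \<beta> n \<ge> 0" by (fact assms(2), fact assms(3))
  have sa: "summable \<alpha>"
    by (rule summable_comparison_test'[OF assms(6), where N=1]) (use an le_nmult in auto)
  have sb: "summable \<beta>"
    by (rule summable_comparison_test'[OF assms(7), where N=1]) (use bn le_nmult in auto)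
  have sa1: "summable (\<lambda>m. (real m + 1) * \<alpha> m)"
    using summable_add[OF assms(6) sa] by (simp add: algebra_simps)
  have sb1: "summable (\<lambda>m. (real m + 1) * \<beta> m)"
    using summable_add[OF assms(7) sb] by (simp add: algebra_simps)
  have sz: "summable (\<lambda>m. (real m + 1) * \<bar>c m * z ^ m\<bar>)"
    if "summable (\<lambda>m. (real m + 1) * c m)" "\<And>m. c m \<ge> 0" "\<bar>z\<bar> \<le> 1" for c :: "nat \<Rightarrow> real" and z :: real
  proof (rule summable_comparison_test'[OF that(1), where N=0])
    fix m :: nat
    have "\<bar>c m * z ^ m\<bar> = c m * \<bar>z\<bar> ^ m" using that(2)[of m] by (simp add: abs_mult power_abs)
    also have "\<dots> \<le> c m * 1" using that(2)[of m] that(3) by (intro mult_left_mono power_le_one) auto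
    finally have "\<bar>c m * z ^ m\<bar> \<le> c m" by simp
    then show "norm ((real m + 1) * \<bar>c m * z ^ m\<bar>) \<le> (real m + 1) * c m"
      by (simp add: abs_mult mult_left_mono)
  qed
  have hs: "((\<lambda>g. \<alpha> (g ! 0) * \<beta> (g ! L) * motzkin_weight \<sigma> L g * y0 ^ (g ! 0) * y1 ^ (g ! L)) has_sum
             M_int \<alpha> \<beta> \<sigma> L y0 y1) (motzkin_paths L)" if y0: "\<bar>y0\<bar> \<le> 1" and y1: "\<bar>y1\<bar> \<le> 1" for y0 y1 :: real
  proof -
    have ms: "(\<lambda>m. (\<alpha> m * y0 ^ m) * (\<Sum>n. (\<beta> n * y1 ^ n) * Wf \<sigma> L m n)) sums M_int \<alpha> \<beta> \<sigma> L y0 y1"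
      using M_series[OF sz[OF sa1 an y0] sz[OF sb1 bn y1], of \<sigma> L]
      unfolding M_int_def Phi_def by simp
    show ?thesis using paths_has_sum[OF s an bn sa sb y0 y1, of L] sums_unique[OF ms] by simp
  qed
  define F where "F g = \<alpha> (g ! 0) * \<beta> (g ! L) * motzkin_weight \<sigma> L g" for g
  have "(F has_sum M_int \<alpha> \<beta> \<sigma> L 1 1) (motzkin_paths L)"
    using hs[of 1 1] unfolding F_def[abs_def] by simp
  then have D: "infsum F (motzkin_paths L) = M_int \<alpha> \<beta> \<sigma> L 1 1" by (rule infsumI)
  have "((\<lambda>g. (F g * z0 ^ (g ! 0) * z1 ^ (g ! L)) * (1 / M_int \<alpha> \<beta> \<sigma> L 1 1)) has_sum
          M_int \<alpha> \<beta> \<sigma> L z0 z1 * (1 / M_int \<alpha> \<beta> \<sigma> L 1 1)) (motzkin_paths L)"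
    by (rule has_sum_cmult_left) (use hs[OF z0 z1] in \<open>simp add: F_def\<close>)
  moreover have "motzkin_prob \<alpha> \<beta> \<sigma> L g * z0 ^ (g ! 0) * z1 ^ (g ! L) =
      (F g * z0 ^ (g ! 0) * z1 ^ (g ! L)) * (1 / M_int \<alpha> \<beta> \<sigma> L 1 1)" for g
    unfolding motzkin_prob_def F_def[symmetric] D by simp
  ultimately show "((\<lambda>\<gamma>. motzkin_prob \<alpha> \<beta> \<sigma> L \<gamma> * z0 ^ (\<gamma> ! 0) * z1 ^ (\<gamma> ! L))
              has_sum (M_int \<alpha> \<beta> \<sigma> L z0 z1 / M_int \<alpha> \<beta> \<sigma> L 1 1)) (motzkin_paths L)"
    by simp
qed


end
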